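(* Let $(X,\le,\ast)$ be a semiframe and let $x\in X$ with $x\neq\bot_X$. The following are equivalent: (1) $x$ is transitive; (2) $x^\ast$ is a completely prime semifilter (an abstract point); (3) $x^\ast$ is a semifilter; (4) $x^\ast$ is compatible; (5) $x^\ast$ is a maximal semifilter.
   Context: A semiframe is a triple $(X,\le,\ast)$ where $(X,\le)$ is a complete join-semilattice (every subset $Y$ has a join $\bigvee Y$; $\bot_X=\bigvee\varnothing$, $\top_X=\bigvee X$) and $\ast\subseteq X\times X$ is a compatibility relation: commutative; $x\ast x$ for every $x\neq\bot_X$; and $x\ast\bigvee Y$ iff $x\ast y$ for some $y\in Y$. A subset $F\subseteq X$ is compatible when $y\ast y'$ for all $y,y'\in F$; up-closed when $y\in F$, $y\le y'$ imply $y'\in F$; a semifilter is a nonempty up-closed compatible subset; it is completely prime when for every (possibly empty) $Y\subseteq X$, $\bigvee Y\in F$ implies $y\in F$ for some $y\in Y$; it is maximal when contained in no strictly larger semifilter. An abstract point is a completely prime semifilter. $x^\ast=\{x'\in X\mid x'\ast x\}$. An element $x$ is transitive when $x\neq\bot_X$ and for all $x',x''$, $x'\ast x$ and $x\ast x''$ imply $x'\ast x''$. *)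

theory Defs
  imports Main
begin

text \<open>A complete join-semilattice is the same thing as a complete lattice; we take the
carrier to be a type of class complete_lattice, with joins given by Sup.
A semiframe is then determined by its compatibility relation.\<close>

definition semiframe :: "('a::complete_lattice \<Rightarrow> 'a \<Rightarrow> bool) \<Rightarrow> bool" where
  "semiframe cmp \<longleftrightarrow>
     (\<forall>x y. cmp x y \<longrightarrow> cmp y x) \<and>
     (\<forall>x. x \<noteq> bot \<longrightarrow> cmp x x) \<and>
     (\<forall>x Y. cmp x (Sup Y) \<longleftrightarrow> (\<exists>y\<in>Y. cmp x y))"

definition compatible_set :: "('a \<Rightarrow> 'a \<Rightarrow> bool) \<Rightarrow> 'a set \<Rightarrow> bool" where
  "compatible_set cmp F \<longleftrightarrow> (\<forall>y\<in>F. \<forall>y'\<in>F. cmp y y')"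

definition up_closed :: "'a::order set \<Rightarrow> bool" where
  "up_closed F \<longleftrightarrow> (\<forall>y y'. y \<in> F \<longrightarrow> y \<le> y' \<longrightarrow> y' \<in> F)"

definition semifilter :: "('a::order \<Rightarrow> 'a \<Rightarrow> bool) \<Rightarrow> 'a set \<Rightarrow> bool" where
  "semifilter cmp F \<longleftrightarrow> F \<noteq> {} \<and> up_closed F \<and> compatible_set cmp F"

definition completely_prime :: "'a::complete_lattice set \<Rightarrow> bool" where
  "completely_prime F \<longleftrightarrow> (\<forall>Y. Sup Y \<in> F \<longrightarrow> (\<exists>y\<in>Y. y \<in> F))"

definition abstract_point :: "('a::complete_lattice \<Rightarrow> 'a \<Rightarrow> bool) \<Rightarrow> 'a set \<Rightarrow> bool" where
  "abstract_point cmp F \<longleftrightarrow> semifilter cmp F \<and> completely_prime F"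

definition maximal_semifilter :: "('a::order \<Rightarrow> 'a \<Rightarrow> bool) \<Rightarrow> 'a set \<Rightarrow> bool" where
  "maximal_semifilter cmp F \<longleftrightarrow>
     semifilter cmp F \<and> (\<forall>G. semifilter cmp G \<longrightarrow> F \<subseteq> G \<longrightarrow> G = F)"

definition compat_set :: "('a \<Rightarrow> 'a \<Rightarrow> bool) \<Rightarrow> 'a \<Rightarrow> 'a set" where
  "compat_set cmp x = {x'. cmp x' x}"

definition transitive_elem :: "('a::complete_lattice \<Rightarrow> 'a \<Rightarrow> bool) \<Rightarrow> 'a \<Rightarrow> bool" where
  "transitive_elem cmp x \<longleftrightarrow> x \<noteq> bot \<and>
     (\<forall>x' x''. cmp x' x \<longrightarrow> cmp x x'' \<longrightarrow> cmp x' x'')"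

end

theory Submission
  imports Defs
begin

theorem proposition9p9:
  fixes cmp :: "'a::complete_lattice \<Rightarrow> 'a \<Rightarrow> bool" and x :: 'a
  assumes "semiframe cmp" and "x \<noteq> bot"
  shows "(transitive_elem cmp x \<longleftrightarrow> abstract_point cmp (compat_set cmp x))
       \<and> (abstract_point cmp (compat_set cmp x) \<longleftrightarrow> semifilter cmp (compat_set cmp x))
       \<and> (semifilter cmp (compat_set cmp x) \<longleftrightarrow> compatible_set cmp (compat_set cmp x))
       \<and> (compatible_set cmp (compat_set cmp x) \<longleftrightarrow> maximal_semifilter cmp (compat_set cmp x))"
proof -
  have sym: "\<And>a b. cmp a b \<Longrightarrow> cmp b a" using assms(1) unfolding semiframe_def by blast
  have refl: "cmp x x" using assms unfolding semiframe_def by blast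
  have sup: "\<And>a Y. cmp a (Sup Y) \<longleftrightarrow> (\<exists>y\<in>Y. cmp a y)" using assms(1) unfolding semiframe_def by blast
  have mono: "\<And>a b c. a \<le> b \<Longrightarrow> cmp c a \<Longrightarrow> cmp c b"
  proof -
    fix a b c assume "a \<le> b" "cmp c a"
    then have "Sup {a,b} = b" by (simp add: sup_absorb2)
    moreover have "cmp c (Sup {a,b})" using sup \<open>cmp c a\<close> by blast
    ultimately show "cmp c b" by simp
  qed
  let ?S = "compat_set cmp x"
  have ne: "?S \<noteq> {}" using refl unfolding compat_set_def by blast
  have up: "up_closed ?S" unfolding up_closed_def compat_set_def
    using mono sym by blast
  have cp: "completely_prime ?S" unfolding completely_prime_def compat_set_def
    using sup sym by blast
  have t_c: "transitive_elem cmp x \<longleftrightarrow> compatible_set cmp ?S"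
    unfolding transitive_elem_def compatible_set_def compat_set_def
    using assms(2) sym by blast
  have s_c: "semifilter cmp ?S \<longleftrightarrow> compatible_set cmp ?S"
    unfolding semifilter_def using ne up by blast
  have a_s: "abstract_point cmp ?S \<longleftrightarrow> semifilter cmp ?S"
    unfolding abstract_point_def using cp by blast
  have m_s: "maximal_semifilter cmp ?S \<longleftrightarrow> semifilter cmp ?S"
  proof
    assume "semifilter cmp ?S"
    moreover have "\<forall>G. semifilter cmp G \<longrightarrow> ?S \<subseteq> G \<longrightarrow> G = ?S"
    proof (intro allI impI)
      fix G assume G: "semifilter cmp G" "?S \<subseteq> G"
      have "x \<in> G" using G(2) refl unfolding compat_set_def by blast
      then have "G \<subseteq> ?S" using G(1) unfolding semifilter_def compatible_set_def compat_set_def by blast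
      then show "G = ?S" using G(2) by blast
    qed
    ultimately show "maximal_semifilter cmp ?S" unfolding maximal_semifilter_def by blast
  qed (simp add: maximal_semifilter_def)
  show ?thesis using t_c s_c a_s m_s by blast
qed

end
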